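(* Let $K,T\subset\mathbb{R}^n$ be convex bodies and let $q=(q_1,\dots,q_m)$ be a closed $(K,T)$-Minkowski billiard trajectory with closed dual billiard trajectory $p=(p_1,\dots,p_m)$. Then $\{q_1,\dots,q_m\}\in F(K)$ and $\{p_1,\dots,p_m\}\in F(T)$.
   Context: A convex body is a compact convex set in $\mathbb{R}^n$ containing the origin in its interior. For a convex body $K$, $F(K)$ denotes the set of subsets of $\mathbb{R}^n$ which cannot be translated into the interior $\mathring K$ of $K$ (i.e., $A\in F(K)$ iff $A+x\not\subseteq\mathring K$ for all $x\in\mathbb{R}^n$). For a convex set $C$ and $z\in\partial C$, $N_C(z)=\{v:\langle v,y-z\rangle\le 0\ \forall y\in C\}$. A closed polygonal curve $(q_1,\dots,q_m)$, $m\ge2$, always satisfies $q_j\ne q_{j+1}$ and $q_j\notin[q_{j-1},q_{j+1}]$ (indices mod $m$). A closed polygonal curve $q$ with vertices on $\partial K$ is a closed $(K,T)$-Minkowski billiard trajectory if there are $p_1,\dots,p_m\in\partial T$ with $q_{j+1}-q_j\in N_T(p_j)$ and $p_{j+1}-p_j\in -N_K(q_{j+1})$ for all $j$; $p=(p_1,\dots,p_m)$ is a closed dual billiard trajectory in $T$. *)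

theory Defs
  imports "HOL-Analysis.Analysis"
begin

definition convex_body :: "'a::euclidean_space set \<Rightarrow> bool" where
  "convex_body K \<longleftrightarrow> compact K \<and> convex K \<and> 0 \<in> interior K"

definition F :: "'a::euclidean_space set \<Rightarrow> 'a set set" where
  "F K = {A. \<forall>x. \<not> ((\<lambda>a. a + x) ` A \<subseteq> interior K)}"

definition normal_cone :: "'a::euclidean_space set \<Rightarrow> 'a \<Rightarrow> 'a set" where
  "normal_cone C z = {v. \<forall>y\<in>C. inner v (y - z) \<le> 0}"

definition closed_polygonal_curve :: "nat \<Rightarrow> (nat \<Rightarrow> 'a::euclidean_space) \<Rightarrow> bool" where
  "closed_polygonal_curve m q \<longleftrightarrow> m \<ge> 2 \<and>
     (\<forall>j<m. q j \<noteq> q ((j + 1) mod m) \<and>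
            q j \<notin> closed_segment (q ((j + m - 1) mod m)) (q ((j + 1) mod m)))"

definition minkowski_billiard_traj ::
  "'a::euclidean_space set \<Rightarrow> 'a set \<Rightarrow> nat \<Rightarrow> (nat \<Rightarrow> 'a) \<Rightarrow> (nat \<Rightarrow> 'a) \<Rightarrow> bool" where
  "minkowski_billiard_traj K T m q p \<longleftrightarrow>
     closed_polygonal_curve m q \<and>
     (\<forall>j<m. q j \<in> frontier K) \<and>
     (\<forall>j<m. p j \<in> frontier T) \<and>
     (\<forall>j<m. q ((j + 1) mod m) - q j \<in> normal_cone T (p j)) \<and>
     (\<forall>j<m. p ((j + 1) mod m) - p j \<in> uminus ` normal_cone K (q ((j + 1) mod m)))"

end

theory Submission
  imports Defs
begin

lemma normal_interior_strict:
  fixes C :: "'a::euclidean_space set"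
  assumes z: "z \<in> interior C" and v: "v \<in> normal_cone C y" and nz: "v \<noteq> 0"
  shows "inner v (z - y) < 0"
proof -
  obtain e where e: "e > 0" "ball z e \<subseteq> C" using z by (meson mem_interior)
  define t where "t = e / (2 * norm v)"
  have t: "t > 0" using e nz by (simp add: t_def)
  have "norm (t *\<^sub>R v) = e / 2" using nz e by (simp add: t_def)
  hence "z + t *\<^sub>R v \<in> ball z e" using e by (simp add: dist_norm)
  hence "z + t *\<^sub>R v \<in> C" using e by blast
  hence "inner v (z + t *\<^sub>R v - y) \<le> 0" using v by (simp add: normal_cone_def)
  moreover have "inner v (z + t *\<^sub>R v - y) = inner v (z - y) + t * (inner v v)"
    by (simp add: inner_diff_right inner_add_right algebra_simps)
  moreover have "t * inner v v > 0" using t nz by simp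
  ultimately show ?thesis by linarith
qed

lemma telescope:
  fixes f :: "nat \<Rightarrow> 'a::ab_group_add"
  assumes "m > 0"
  shows "(\<Sum>j<m. f ((j + 1) mod m) - f j) = 0"
proof -
  obtain k where m: "m = Suc k" using assms by (cases m) auto
  have a: "(\<Sum>j<Suc k. f ((j + 1) mod Suc k)) = (\<Sum>j<k. f ((j + 1) mod Suc k)) + f ((k+1) mod Suc k)"
    by (rule sum.lessThan_Suc)
  have b: "(\<Sum>j<k. f ((j + 1) mod Suc k)) = (\<Sum>j<k. f (Suc j))"
    by (rule sum.cong) auto
  have c: "(\<Sum>j<Suc k. f j) = f 0 + (\<Sum>j<k. f (Suc j))"
    by (rule sum.lessThan_Suc_shift)
  have "(\<Sum>j<m. f ((j + 1) mod m)) = (\<Sum>j<m. f j)"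
    unfolding m a b c by simp
  thus ?thesis by (simp add: sum_subtractf)
qed

lemma all_zero:
  fixes w :: "nat \<Rightarrow> 'a::euclidean_space"
  assumes s: "(\<Sum>j<m. w j) = 0" and h: "\<And>j. j < m \<Longrightarrow> w j \<noteq> 0 \<Longrightarrow> inner (w j) c < 0"
  shows "\<forall>j<m. w j = 0"
proof (rule ccontr)
  assume "\<not> (\<forall>j<m. w j = 0)"
  then obtain i where i: "i < m" "w i \<noteq> 0" by auto
  have le: "\<forall>j\<in>{..<m}. inner (w j) c \<le> 0"
  proof
    fix j assume "j \<in> {..<m}"
    hence j: "j < m" by simp
    show "inner (w j) c \<le> 0"
    proof (cases "w j = 0")
      case False thus ?thesis using h[OF j] by force
    qed simp
  qed
  have "(\<Sum>j<m. inner (w j) c) = inner (\<Sum>j<m. w j) c" by (simp add: inner_sum_left)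
  hence "(\<Sum>j<m. - inner (w j) c) = 0" using s by (simp add: sum_negf)
  hence "\<forall>j\<in>{..<m}. - inner (w j) c = 0"
    using sum_nonneg_eq_0_iff[of "{..<m}" "\<lambda>j. - inner (w j) c"] le by auto
  hence "inner (w i) c = 0" using i by simp
  thus False using h[OF i] by simp
qed

theorem proposition3p9:
  fixes K T :: "'a::euclidean_space set" and q p :: "nat \<Rightarrow> 'a" and m :: nat
  assumes "convex_body K" and "convex_body T"
    and "minkowski_billiard_traj K T m q p"
  shows "q ` {..<m} \<in> F K \<and> p ` {..<m} \<in> F T"
proof -
  have m: "m \<ge> 2" and qne: "\<forall>j<m. q j \<noteq> q ((j + 1) mod m)"
    and wN: "\<forall>j<m. q ((j + 1) mod m) - q j \<in> normal_cone T (p j)"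
    and vN: "\<forall>j<m. p ((j + 1) mod m) - p j \<in> uminus ` normal_cone K (q ((j + 1) mod m))"
    using assms(3) unfolding minkowski_billiard_traj_def closed_polygonal_curve_def by blast+
  have m0: "m > 0" using m by simp
  define w where "w j = q ((j + 1) mod m) - q j" for j
  have wsum: "(\<Sum>j<m. w j) = 0" unfolding w_def by (rule telescope[OF m0])
  have wnz: "w 0 \<noteq> 0" using qne m0 by (auto simp: w_def)
  have 0: "0 \<in> interior T" using assms(2) by (simp add: convex_body_def)
  have partp: "p ` {..<m} \<in> F T"
    unfolding F_def
  proof (clarify)
    fix x assume sub: "(\<lambda>a. a + x) ` p ` {..<m} \<subseteq> interior T"
    have "\<forall>j<m. w j = 0"
    proof (rule all_zero[OF wsum, of x])
      fix j assume j: "j < m" "w j \<noteq> 0"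
      have "p j \<in> p ` {..<m}" using j by (intro imageI) simp
      hence "p j + x \<in> (\<lambda>a. a + x) ` p ` {..<m}" by (rule imageI)
      hence "p j + x \<in> interior T" using sub by (rule subsetD[rotated])
      from normal_interior_strict[OF this _ j(2), of "p j"] wN j
      show "inner (w j) x < 0" by (simp add: w_def)
    qed
    thus False using wnz m0 by auto
  qed
  have partq: "q ` {..<m} \<in> F K"
    unfolding F_def
  proof (clarify)
    fix x assume sub: "(\<lambda>a. a + x) ` q ` {..<m} \<subseteq> interior K"
    define v where "v j = p j - p ((j + 1) mod m)" for j
    have vsum: "(\<Sum>j<m. v j) = 0"
    proof -
      have "(\<Sum>j<m. v j) = (\<Sum>j<m. - (p ((j + 1) mod m) - p j))"
        unfolding v_def by simp
      also have "\<dots> = - (\<Sum>j<m. p ((j + 1) mod m) - p j)"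
        by (rule sum_negf)
      finally have "(\<Sum>j<m. v j) = - (\<Sum>j<m. p ((j + 1) mod m) - p j)" .
      thus ?thesis using telescope[OF m0, of p] by simp
    qed
    have "\<forall>j<m. v j = 0"
    proof (rule all_zero[OF vsum, of x])
      fix j assume j: "j < m" "v j \<noteq> 0"
      have "(j+1) mod m < m" using m0 by simp
      hence "q ((j+1) mod m) \<in> q ` {..<m}" by (intro imageI) simp
      hence "q ((j+1) mod m) + x \<in> (\<lambda>a. a + x) ` q ` {..<m}" by (rule imageI)
      hence "q ((j+1) mod m) + x \<in> interior K" using sub by (rule subsetD[rotated])
      moreover have "v j \<in> normal_cone K (q ((j + 1) mod m))"
      proof -
        from vN[rule_format, OF j(1)] obtain u where u: "u \<in> normal_cone K (q ((j + 1) mod m))" "p ((j + 1) mod m) - p j = - u"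
          by (rule imageE)
        have "u = - (p ((j + 1) mod m) - p j)" using u(2) by simp
        hence "v j = u" unfolding v_def by simp
        thus ?thesis using u(1) by simp
      qed
      ultimately have "inner (v j) (q ((j+1) mod m) + x - q ((j+1) mod m)) < 0"
        by (rule normal_interior_strict[OF _ _ j(2)])
      thus "inner (v j) x < 0" by simp
    qed
    hence peq: "\<forall>j<m. p ((j + 1) mod m) = p j" unfolding v_def by (metis eq_iff_diff_eq_0)
    have pc: "j < m \<longrightarrow> p j = p 0" for j
    proof (induction j)
      case (Suc j)
      show ?case
      proof
        assume sj: "Suc j < m"
        hence jm: "j < m" by simp
        have "(j + 1) mod m = Suc j" using sj by simp
        hence "p (Suc j) = p j" using peq[rule_format, OF jm] by simp
        thus "p (Suc j) = p 0" using Suc jm by simp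
      qed
    qed simp
    have "\<forall>j<m. w j = 0"
    proof (rule all_zero[OF wsum, of "- p 0"])
      fix j assume j: "j < m" "w j \<noteq> 0"
      have "w j \<in> normal_cone T (p 0)" using wN[rule_format, OF j(1)] pc[of j] j(1) unfolding w_def by simp
      from normal_interior_strict[OF 0 this j(2)]
      show "inner (w j) (- p 0) < 0" by simp
    qed
    thus False using wnz m0 by auto
  qed
  show ?thesis using partp partq by simp
qed

end
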